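(* Let $q\in(0,1]$. Then $\mathrm{F\o l}^{\mathrm{inn}}(R(SO_q(3)))=1-q^4$ and $\mathrm{F\o l}(R(SO_q(3)))=q^{-4}-q^4$.
   Context: $R(SO_q(3))$ is the fusion algebra with irreducible objects $I=\mathbb{Z}_+$, unit $0$, trivial involution, product $m\cdot n=\sum_{k=|m-n|}^{m+n}k$ (all integers in that range), and dimension $d(n)=[2n+1]_q$, where $[x]_q=\frac{q^{-x}-q^x}{q^{-1}-q}$ for $0<q<1$ and $[x]_1=x$. $\mathrm{supp}(r)$ is the set of elements of $I$ with nonzero coefficient in $r$. For $A\subseteq I$, $|A|=\sum_{\beta\in A}d(\beta)^2$, $A^c=I\setminus A$. A finite generating set is a finite $X\subseteq I$ such that every element of $I$ lies in $\mathrm{supp}$ of some product of elements of $X$. For finite $X,A$: $\partial_X(A)=\{\beta\in A:\exists x\in X,\ \mathrm{supp}(\beta x)\not\subseteq A\}\cup\{\beta\in A^c:\exists x\in X,\ \mathrm{supp}(\beta x)\not\subseteq A^c\}$, $\partial^{\mathrm{inn}}_X(A)=\{\beta\in A:\exists x\in X,\ \mathrm{supp}(\beta x)\not\subseteq A\}$. $\mathrm{F\o l}_X=\inf_A|\partial_XA|/|A|$, $\mathrm{F\o l}^{\mathrm{inn}}_X=\inf_A|\partial^{\mathrm{inn}}_XA|/|A|$ over nonempty finite $A$; $\mathrm{F\o l}$ and $\mathrm{F\o l}^{\mathrm{inn}}$ are their infima over finite generating sets $X$. *)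

theory Defs
  imports Complex_Main
begin

text \<open>The fusion algebra R(SO_q(3)): irreducibles are the naturals, unit 0,
  fusion rule m*n = sum of k for |m-n| <= k <= m+n.\<close>

definition qnum :: "real \<Rightarrow> real \<Rightarrow> real" where
  "qnum q x = (if q = 1 then x else (q powr (-x) - q powr x) / (q powr (-1) - q))"

definition dimq :: "real \<Rightarrow> nat \<Rightarrow> real" where
  "dimq q n = qnum q (2 * real n + 1)"

definition fsupp :: "nat \<Rightarrow> nat \<Rightarrow> nat set" where
  "fsupp m n = {k. nat \<bar>int m - int n\<bar> \<le> k \<and> k \<le> m + n}"

text \<open>Support of the product x1 * ... * xk of a list of irreducibles
  (all fusion coefficients are nonnegative, so supports add up).\<close>
fun prodsupp :: "nat list \<Rightarrow> nat set" where
  "prodsupp [] = {0}"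
| "prodsupp (x # xs) = (\<Union>\<beta>\<in>prodsupp xs. fsupp \<beta> x)"

definition generating :: "nat set \<Rightarrow> bool" where
  "generating X \<longleftrightarrow> finite X \<and>
     (\<forall>\<alpha>. \<exists>xs. xs \<noteq> [] \<and> set xs \<subseteq> X \<and> \<alpha> \<in> prodsupp xs)"

definition wsize :: "real \<Rightarrow> nat set \<Rightarrow> real" where
  "wsize q A = (\<Sum>\<beta>\<in>A. (dimq q \<beta>)^2)"

definition bdry_inn :: "nat set \<Rightarrow> nat set \<Rightarrow> nat set" where
  "bdry_inn X A = {\<beta>\<in>A. \<exists>x\<in>X. \<not> fsupp \<beta> x \<subseteq> A}"

definition bdry :: "nat set \<Rightarrow> nat set \<Rightarrow> nat set" where
  "bdry X A = {\<beta>\<in>A. \<exists>x\<in>X. \<not> fsupp \<beta> x \<subseteq> A}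
            \<union> {\<beta>\<in>-A. \<exists>x\<in>X. \<not> fsupp \<beta> x \<subseteq> -A}"

definition FolX :: "real \<Rightarrow> nat set \<Rightarrow> real" where
  "FolX q X = Inf {wsize q (bdry X A) / wsize q A | A. finite A \<and> A \<noteq> {}}"

definition FolX_inn :: "real \<Rightarrow> nat set \<Rightarrow> real" where
  "FolX_inn q X = Inf {wsize q (bdry_inn X A) / wsize q A | A. finite A \<and> A \<noteq> {}}"

definition Fol :: "real \<Rightarrow> real" where
  "Fol q = Inf {FolX q X | X. generating X}"

definition Fol_inn :: "real \<Rightarrow> real" where
  "Fol_inn q = Inf {FolX_inn q X | X. generating X}"

end

theory Submission
  imports Defs
begin


lemma dimq_one: "dimq 1 k = 2 * real k + 1"
  by (simp add: dimq_def qnum_def)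

lemma dimq_lt: assumes "0 < q" "q < 1"
  shows "dimq q k = (1 / q^(2*k+1) - q^(2*k+1)) / (1/q - q)"
proof -
  have e: "2 * real k + 1 = real (2*k+1)" by simp
  have "q powr (2 * real k + 1) = q^(2*k+1)" by (simp only: e powr_realpow[OF assms(1)])
  moreover have "q powr (-(2 * real k + 1)) = 1 / q^(2*k+1)"
    by (subst powr_minus_divide, subst \<open>q powr (2 * real k + 1) = q^(2*k+1)\<close>, rule refl)
  ultimately show ?thesis using assms by (simp add: dimq_def qnum_def powr_neg_one)
qed

lemma dimq_facts:
  assumes "0 < q" "q \<le> 1"
  shows "dimq q 0 = 1" and "q^2 * dimq q (Suc k) - dimq q k \<ge> 0"
    and "q^2 * dimq q (Suc k) - dimq q k \<le> 2"
    and "dimq q (Suc k) \<ge> dimq q k + 2"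
proof -
  have all: "dimq q 0 = 1 \<and> q^2 * dimq q (Suc k) - dimq q k \<ge> 0 \<and>
    q^2 * dimq q (Suc k) - dimq q k \<le> 2 \<and> dimq q (Suc k) \<ge> dimq q k + 2"
  proof (cases "q = 1")
    case True thus ?thesis by (simp add: dimq_one)
  next
    case False
    hence q1: "q < 1" using assms by simp
    define a where "a = q^(2*k+1)"
    have a0: "0 < a" using assms by (simp add: a_def)
    have aq: "a * q \<le> 1" using assms q1 unfolding a_def
      by (metis less_eq_real_def mult.commute power_Suc power_le_one)
    have sk: "q^(2*Suc k+1) = a * q^2" by (simp add: a_def power_add power2_eq_square)
    have D: "1/q - q > 0" using assms q1 proof -
      have "q*q < 1" using mult_strict_mono[of q 1 q 1] assms q1 by simp
      moreover have "1/q - q = (1-q*q)/q" using assms by (simp add: field_simps)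
      ultimately show ?thesis using assms by simp
    qed
    have dk: "dimq q k = (1/a - a)/(1/q - q)" using dimq_lt[OF assms(1) q1] a_def by simp
    have dsk: "dimq q (Suc k) = (1/(a*q^2) - a*q^2)/(1/q - q)" using dimq_lt[OF assms(1) q1, of "Suc k"] sk by simp
    define Dv where "Dv = 1/q - q"
    have Dv0: "Dv \<noteq> 0" using D Dv_def by simp
    have n1: "q^2*(1/(a*q^2) - a*q^2) - (1/a - a) = (a*q*(1+q^2)) * Dv"
      unfolding Dv_def using assms a0 by (simp add: field_simps power2_eq_square)
    have n2: "(1/(a*q^2) - a*q^2) - (1/a - a) = (1/(a*q) + a*q) * Dv"
      unfolding Dv_def using assms a0 by (simp add: field_simps power2_eq_square)
    have e1: "q^2 * dimq q (Suc k) - dimq q k = a*q*(1+q^2)"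
    proof -
      have "q^2 * dimq q (Suc k) - dimq q k = (q^2*(1/(a*q^2) - a*q^2) - (1/a - a)) / Dv"
        unfolding dk dsk Dv_def[symmetric] using Dv0 by (simp add: diff_divide_distrib[symmetric] times_divide_eq_right)
      also have "\<dots> = a*q*(1+q^2)" unfolding n1 using Dv0 by simp
      finally show ?thesis .
    qed
    have e2: "dimq q (Suc k) - dimq q k = 1/(a*q) + a*q"
    proof -
      have "dimq q (Suc k) - dimq q k = ((1/(a*q^2) - a*q^2) - (1/a - a)) / Dv"
        unfolding dk dsk Dv_def[symmetric] using Dv0 by (simp add: diff_divide_distrib)
      also have "\<dots> = 1/(a*q) + a*q" unfolding n2 using Dv0 by simp
      finally show ?thesis .
    qed
    have "1/(a*q) + a*q \<ge> 2"
    proof -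
      have "0 \<le> (a*q - 1)^2" by simp
      hence "2 * (a*q) \<le> 1 + (a*q)*(a*q)" by (simp add: power2_eq_square algebra_simps)
      thus ?thesis using a0 assms by (simp add: field_simps)
    qed
    moreover have "a*q*(1+q^2) \<le> 2"
    proof -
      have "q^2 \<le> 1" using assms by (simp add: power_le_one)
      hence q22: "1 + q^2 \<le> 2" by simp
      have "a*q*(1+q^2) \<le> 1 * 2" using aq q22 by (intro mult_mono) auto
      thus ?thesis by simp
    qed
    moreover have "dimq q 0 = 1" using dimq_lt[OF assms(1) q1, of 0] D assms by (simp add: field_simps)
    ultimately show ?thesis using e1 e2 a0 assms by simp
  qed
  thus "dimq q 0 = 1" "q^2 * dimq q (Suc k) - dimq q k \<ge> 0"
    "q^2 * dimq q (Suc k) - dimq q k \<le> 2" "dimq q (Suc k) \<ge> dimq q k + 2" by auto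
qed



lemma fsupp_iff: "k \<in> fsupp m n \<longleftrightarrow> (m \<le> k + n \<and> n \<le> k + m \<and> k \<le> m + n)"
  by (auto simp: fsupp_def)

context
  fixes q :: real
  assumes q0: "0 < q" and q1: "q \<le> 1"
begin

lemma d_step: "dimq q k \<le> q^2 * dimq q (Suc k)" "q^2 * dimq q (Suc k) \<le> dimq q k + 2"
  "dimq q k + 2 \<le> dimq q (Suc k)"
  using dimq_facts(2-4)[OF q0 q1, of k] by auto

lemma d_mono: "k \<le> m \<Longrightarrow> dimq q k \<le> dimq q m"
proof (induction m rule: dec_induct)
  case base thus ?case by simp
next
  case (step m) thus ?case using d_step(3)[of m] by linarith
qed

lemma d_ge: "dimq q k \<ge> 2 * real k + 1"
proof (induction k)
  case 0 thus ?case using dimq_facts(1)[OF q0 q1] by simp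
next
  case (Suc k) thus ?case using d_step(3)[of k] by simp
qed

lemma d_pos: "dimq q k > 0" using d_ge[of k] by linarith

lemma d_shift: assumes "1 \<le> x" shows "dimq q k \<le> q^2 * dimq q (k + x)"
proof -
  have "dimq q (Suc k) \<le> dimq q (k + x)" using assms by (intro d_mono) simp
  hence "q^2 * dimq q (Suc k) \<le> q^2 * dimq q (k + x)" by (simp add: mult_left_mono)
  thus ?thesis using d_step(1)[of k] by linarith
qed

lemma d_sq_shift: assumes "1 \<le> x" shows "(dimq q k)^2 \<le> q^4 * (dimq q (k + x))^2"
proof -
  have "(dimq q k)^2 \<le> (q^2 * dimq q (k + x))^2"
    using d_shift[OF assms, of k] d_pos[of k] by (intro power_mono) auto
  thus ?thesis by (simp add: power_mult_distrib flip: power_mult)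
qed

lemma wsize_nonneg: "0 \<le> wsize q A" unfolding wsize_def by (simp add: sum_nonneg)

lemma d_nz: "dimq q k \<noteq> 0" using d_pos[of k] by linarith

lemma wsize_pos: "finite A \<Longrightarrow> A \<noteq> {} \<Longrightarrow> 0 < wsize q A"
  unfolding wsize_def by (intro sum_pos) (auto simp: d_nz)

lemma wsize_mono: "finite B \<Longrightarrow> A \<subseteq> B \<Longrightarrow> wsize q A \<le> wsize q B"
  unfolding wsize_def by (intro sum_mono2) auto

lemma lower:
  assumes x: "x \<in> X" "1 \<le> x" and fX: "finite X" and fA: "finite A" "A \<noteq> {}"
  shows "(1 - q^4) * wsize q A \<le> wsize q (bdry_inn X A)"
    and "(1/q^4 - q^4) * wsize q A \<le> wsize q (bdry X A)"
proof -
  define R where "R = {b\<in>A. b + x \<notin> A}"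
  define B where "B = {b\<in>A. b + x \<in> A}"
  have AR: "A = R \<union> B" "R \<inter> B = {}" unfolding R_def B_def by auto
  have fR: "finite R" "finite B" using fA unfolding R_def B_def by auto
  have WA: "wsize q A = wsize q R + wsize q B"
    unfolding wsize_def by (subst AR(1), rule sum.union_disjoint) (use fR AR in auto)
  have im: "(\<Sum>b\<in>B. (dimq q (b + x))^2) \<le> wsize q A"
  proof -
    have "(\<Sum>b\<in>B. (dimq q (b + x))^2) = wsize q ((\<lambda>b. b + x) ` B)"
      unfolding wsize_def by (subst sum.reindex) (auto simp: inj_on_def)
    also have "\<dots> \<le> wsize q A" using fA by (intro wsize_mono) (auto simp: B_def)
    finally show ?thesis .
  qed
  have "wsize q B \<le> (\<Sum>b\<in>B. q^4 * (dimq q (b + x))^2)"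
    unfolding wsize_def by (rule sum_mono) (rule d_sq_shift[OF x(2)])
  also have "\<dots> = q^4 * (\<Sum>b\<in>B. (dimq q (b + x))^2)" by (simp add: sum_distrib_left)
  also have "\<dots> \<le> q^4 * wsize q A" using im q0 by (intro mult_left_mono) auto
  finally have WR: "(1 - q^4) * wsize q A \<le> wsize q R" using WA by (simp add: algebra_simps)
  have Rsub: "R \<subseteq> bdry_inn X A"
  proof
    fix b assume "b \<in> R"
    hence "b \<in> A" "b + x \<notin> A" by (auto simp: R_def)
    moreover have "b + x \<in> fsupp b x" by (simp add: fsupp_iff)
    ultimately show "b \<in> bdry_inn X A" unfolding bdry_inn_def using x by blast
  qed
  have "wsize q R \<le> wsize q (bdry_inn X A)"
    using fA by (intro wsize_mono[OF _ Rsub]) (auto simp: bdry_inn_def)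
  thus "(1 - q^4) * wsize q A \<le> wsize q (bdry_inn X A)" using WR by linarith
  define R' where "R' = (\<lambda>b. b + x) ` R"
  have R'sub: "R \<union> R' \<subseteq> bdry X A"
  proof
    fix b assume "b \<in> R \<union> R'"
    thus "b \<in> bdry X A"
    proof
      assume "b \<in> R" thus ?thesis using Rsub unfolding bdry_inn_def bdry_def by blast
    next
      assume "b \<in> R'"
      then obtain c where c: "c \<in> A" "c + x \<notin> A" "b = c + x" by (auto simp: R'_def R_def)
      have "c \<in> fsupp b x" using c(3) by (simp add: fsupp_iff)
      hence "\<not> fsupp b x \<subseteq> - A" using c by blast
      thus ?thesis using c x unfolding bdry_def by blast
    qed
  qed
  have fb: "finite (bdry X A)"
  proof (rule finite_subset)
    show "bdry X A \<subseteq> {..Max A + Max X}"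
    proof
      fix b assume b: "b \<in> bdry X A"
      show "b \<in> {..Max A + Max X}"
      proof (cases "b \<in> A")
        case True thus ?thesis using fA by (simp add: trans_le_add1)
      next
        case False
        then obtain y k where y: "y \<in> X" "k \<in> fsupp b y" "k \<in> A" using b unfolding bdry_def by blast
        have "b \<le> k + y" using y(2) by (simp add: fsupp_iff)
        moreover have "k \<le> Max A" "y \<le> Max X" using y fA fX by auto
        ultimately show ?thesis by simp
      qed
    qed
  qed simp
  have disj: "R \<inter> R' = {}" unfolding R'_def R_def by auto
  have fR': "finite R'" using fR unfolding R'_def by simp
  have WR': "wsize q R' = (\<Sum>b\<in>R. (dimq q (b + x))^2)"
    unfolding wsize_def R'_def by (subst sum.reindex) (auto simp: inj_on_def)
  have q4: "q^4 > 0" using q0 by simp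
  have "wsize q R / q^4 = (\<Sum>b\<in>R. (dimq q b)^2 / q^4)" unfolding wsize_def by (simp add: sum_divide_distrib)
  also have "\<dots> \<le> (\<Sum>b\<in>R. (dimq q (b + x))^2)"
  proof (rule sum_mono)
    fix b show "(dimq q b)^2 / q^4 \<le> (dimq q (b + x))^2"
      using d_sq_shift[OF x(2), of b] q4 by (simp add: divide_le_eq mult.commute)
  qed
  finally have W2: "wsize q R / q^4 \<le> wsize q R'" using WR' by simp
  have eqU: "wsize q (R \<union> R') = wsize q R + wsize q R'"
    unfolding wsize_def by (rule sum.union_disjoint) (use fR fR' disj in auto)
  have "wsize q R + wsize q R' \<le> wsize q (bdry X A)" using wsize_mono[OF fb R'sub] eqU by simp
  moreover have "wsize q R * (1 + 1/q^4) = wsize q R + wsize q R / q^4" by (simp add: algebra_simps)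
  ultimately have W3: "wsize q R * (1 + 1/q^4) \<le> wsize q (bdry X A)" using W2 by linarith
  have "(1/q^4 - q^4) * wsize q A = ((1 - q^4) * wsize q A) * (1 + 1/q^4)"
    using q4 by (simp add: field_simps)
  also have "\<dots> \<le> wsize q R * (1 + 1/q^4)" using WR q4 by (intro mult_right_mono) auto
  finally show "(1/q^4 - q^4) * wsize q A \<le> wsize q (bdry X A)" using W3 by linarith
qed

end


lemma inf_approx:
  fixes S :: "real set"
  assumes ne: "S \<noteq> {}" and lb: "\<forall>s\<in>S. L \<le> s"
    and ap: "\<forall>n::nat. \<exists>s\<in>S. s \<le> L + c / (real n + 1)"
  shows "Inf S = L"
proof -
  have bdd: "bdd_below S" using lb by (auto simp: bdd_below_def)
  have ge: "L \<le> Inf S" using ne lb by (intro cInf_greatest) auto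
  have up: "Inf S \<le> L + c / (real n + 1)" for n
  proof -
    obtain s where "s \<in> S" "s \<le> L + c / (real n + 1)" using ap by blast
    thus ?thesis using cInf_lower[OF \<open>s \<in> S\<close> bdd] by linarith
  qed
  have "Inf S \<le> L"
  proof (rule ccontr)
    assume "\<not> Inf S \<le> L"
    hence e: "Inf S - L > 0" by simp
    obtain n :: nat where n: "c / (Inf S - L) < real n" using reals_Archimedean2 by blast
    have "c / (real n + 1) < Inf S - L"
    proof (cases "c \<le> 0")
      case True
      hence "c / (real n + 1) \<le> 0" by (simp add: divide_nonpos_pos)
      thus ?thesis using e by linarith
    next
      case False
      have "c < (Inf S - L) * real n" using n e by (simp add: divide_less_eq mult.commute)
      also have "\<dots> \<le> (Inf S - L) * (real n + 1)" using e by (intro mult_left_mono) auto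
      finally show ?thesis by (simp add: divide_less_eq mult.commute)
    qed
    thus False using up[of n] by linarith
  qed
  thus ?thesis using ge by simp
qed

lemma prodsupp_zero: "set xs \<subseteq> {0} \<Longrightarrow> prodsupp xs \<subseteq> {0}"
proof (induction xs)
  case Nil thus ?case by simp
next
  case (Cons a xs)
  hence "a = 0" "prodsupp xs \<subseteq> {0}" by auto
  thus ?case by (auto simp: fsupp_iff)
qed

lemma gen_pos: assumes "generating X" shows "\<exists>x\<in>X. 1 \<le> x"
proof (rule ccontr)
  assume "\<not> ?thesis"
  hence "X \<subseteq> {0}" by auto
  obtain xs where "set xs \<subseteq> X" "(1::nat) \<in> prodsupp xs" using assms unfolding generating_def by blast
  thus False using prodsupp_zero[of xs] \<open>X \<subseteq> {0}\<close> by auto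
qed

lemma rep_in: "n \<in> prodsupp (replicate n 1)"
proof (induction n)
  case 0 thus ?case by simp
next
  case (Suc n)
  have "Suc n \<in> fsupp n 1" by (simp add: fsupp_iff)
  thus ?case using Suc by auto
qed

lemma gen_one: "generating {1}"
  unfolding generating_def
proof (intro conjI allI)
  fix a :: nat
  show "\<exists>xs. xs \<noteq> [] \<and> set xs \<subseteq> {1} \<and> a \<in> prodsupp xs"
  proof (cases "a = 0")
    case True
    have "1 \<in> fsupp 0 1" "0 \<in> fsupp 1 1" by (simp_all add: fsupp_iff)
    hence "a \<in> prodsupp [1,1]" using True by auto
    thus ?thesis by (intro exI[of _ "[1,1]"]) auto
  next
    case False
    thus ?thesis using rep_in[of a] by (intro exI[of _ "replicate a 1"]) auto
  qed
qed simp

lemma bi_sub: "bdry_inn {1} {..n} \<subseteq> {n}"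
proof
  fix b assume "b \<in> bdry_inn {1} {..n}"
  hence b: "b \<le> n" "\<not> fsupp b 1 \<subseteq> {..n}" unfolding bdry_inn_def by auto
  have "\<exists>k\<in>fsupp b 1. k \<notin> {..n}" using b(2) by blast
  then obtain k where "k \<in> fsupp b 1" "k > n" by auto
  hence "k \<le> b + 1" by (simp add: fsupp_iff)
  thus "b \<in> {n}" using b \<open>k > n\<close> by simp
qed

lemma b_sub: "bdry {1} {..n} \<subseteq> {n, Suc n}"
proof
  fix b assume b: "b \<in> bdry {1} {..n}"
  show "b \<in> {n, Suc n}"
  proof (cases "b \<le> n")
    case True
    hence "b \<in> bdry_inn {1} {..n}" using b unfolding bdry_def bdry_inn_def by auto
    thus ?thesis using bi_sub by auto
  next
    case False
    hence "\<exists>k\<in>fsupp b 1. k \<in> {..n}" using b unfolding bdry_def by blast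
    then obtain k where "k \<in> fsupp b 1" "k \<le> n" by auto
    hence "b \<le> k + 1" by (simp add: fsupp_iff)
    thus ?thesis using False \<open>k \<le> n\<close> by simp
  qed
qed

lemma ratio_bound:
  fixes B L S c T :: real
  assumes "0 < S" "B \<le> L * S + c * T" "(real n + 1) * T \<le> S" "0 \<le> c"
  shows "B / S \<le> L + c / (real n + 1)"
proof -
  have "c * T * (real n + 1) \<le> c * S" using assms(3,4) mult_left_mono[OF assms(3) assms(4)]
    by (simp add: algebra_simps)
  hence "c * T \<le> c / (real n + 1) * S" by (simp add: field_simps)
  hence "B \<le> (L + c / (real n + 1)) * S" using assms(2) by (simp add: algebra_simps)
  thus ?thesis using assms(1) by (simp add: divide_le_eq)
qed

context
  fixes q :: real
  assumes q0: "0 < q" and q1: "q \<le> 1"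
begin

lemma T_le: "(\<Sum>k\<le>n. dimq q k) \<le> (real n + 1) * dimq q n"
proof (induction n)
  case 0 thus ?case by simp
next
  case (Suc n)
  have "dimq q n \<le> dimq q (Suc n)" by (rule d_mono[OF q0 q1]) simp
  hence "(real n + 1) * dimq q n \<le> (real n + 1) * dimq q (Suc n)" by (intro mult_left_mono) auto
  hence "(\<Sum>k\<le>n. dimq q k) \<le> (real n + 1) * dimq q (Suc n)" using Suc by linarith
  thus ?case by (simp add: algebra_simps)
qed

lemma S_Suc: "wsize q {..Suc n} = wsize q {..n} + (dimq q (Suc n))^2"
  unfolding wsize_def by simp

lemma T_pos: "dimq q n \<le> (\<Sum>k\<le>n. dimq q k)"
  using d_pos[OF q0 q1] by (intro member_le_sum) (auto simp: less_imp_le)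

lemma TS: "(real n + 1) * (\<Sum>k\<le>n. dimq q k) \<le> wsize q {..n}"
proof (induction n)
  case 0 thus ?case using dimq_facts(1)[OF q0 q1] by (simp add: wsize_def)
next
  case (Suc n)
  let ?T = "\<Sum>k\<le>n. dimq q k" and ?d = "dimq q (Suc n)"
  have T1: "?T \<le> (real n + 1) * ?d"
  proof -
    have "(real n + 1) * dimq q n \<le> (real n + 1) * ?d"
      using d_mono[OF q0 q1, of n "Suc n"] by (intro mult_left_mono) auto
    thus ?thesis using T_le[of n] by linarith
  qed
  have dg: "2 * real n + 3 \<le> ?d" using d_ge[OF q0 q1, of "Suc n"] by simp
  have "(2 * real n + 3) * ?d \<le> ?d * ?d" using dg d_pos[OF q0 q1, of "Suc n"] by (intro mult_right_mono) auto
  thus ?case using Suc T1 by (simp add: S_Suc algebra_simps power2_eq_square)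
qed

lemma key_inn: "(dimq q n)^2 \<le> (1 - q^4) * wsize q {..n} + 4 * (\<Sum>k\<le>n. dimq q k)"
proof (induction n)
  case 0
  have "q^4 \<le> 1" using q0 q1 by (simp add: power_le_one)
  thus ?case using dimq_facts(1)[OF q0 q1] by (simp add: wsize_def)
next
  case (Suc n)
  let ?d = "dimq q (Suc n)" and ?b = "dimq q n"
  define a where "a = q^2 * ?d"
  have ab: "0 \<le> a - ?b" "a - ?b \<le> 2" using d_step[OF q0 q1, of n] by (auto simp: a_def)
  have q2: "q^2 \<le> 1" using q0 q1 by (simp add: power_le_one)
  have "a \<le> ?d" unfolding a_def using q2 d_pos[OF q0 q1, of "Suc n"] by (simp add: mult_left_le_one_le less_imp_le)
  hence "a + ?b \<le> 2 * ?d" using ab by linarith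
  hence "(a - ?b) * (a + ?b) \<le> 2 * (2 * ?d)"
    using ab d_pos[OF q0 q1, of n] by (intro mult_mono) auto
  moreover have "a^2 = q^4 * ?d^2" unfolding a_def by (simp add: power_mult_distrib flip: power_mult)
  ultimately have "q^4 * ?d^2 - ?b^2 \<le> 4 * ?d" by (simp add: power2_eq_square algebra_simps)
  thus ?case using Suc by (simp add: S_Suc algebra_simps)
qed

lemma key_full: "(dimq q n)^2 + (dimq q (Suc n))^2
   \<le> (1/q^4 - q^4) * wsize q {..n} + (4 + 12/q^4) * (\<Sum>k\<le>n. dimq q k)"
proof -
  let ?d = "dimq q (Suc n)" and ?b = "dimq q n" and ?T = "\<Sum>k\<le>n. dimq q k" and ?S = "wsize q {..n}"
  define c where "c = 1/q^4"
  have c: "c > 0" "q^4 * c = 1" using q0 by (auto simp: c_def)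
  have "(q^2 * ?d)^2 \<le> (?b + 2)^2"
    using d_step(2)[OF q0 q1, of n] d_pos[OF q0 q1, of "Suc n"] q0 by (intro power_mono) auto
  hence "q^4 * ?d^2 \<le> (?b + 2)^2" by (simp add: power_mult_distrib flip: power_mult)
  hence "c * (q^4 * ?d^2) \<le> c * (?b + 2)^2" using c by (intro mult_left_mono) auto
  moreover have "c * (q^4 * ?d^2) = (q^4 * c) * ?d^2" by (simp only: mult_ac)
  ultimately have d1: "?d^2 \<le> c * (?b + 2)^2" using c by simp
  have b1: "1 \<le> ?b" using d_ge[OF q0 q1, of n] by simp
  have "(?b + 2)^2 \<le> ?b^2 + 8 * ?T" using b1 T_pos[of n] by (simp add: power2_eq_square algebra_simps)
  hence "c * (?b + 2)^2 \<le> c * (?b^2 + 8 * ?T)" using c by (intro mult_left_mono) auto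
  hence "?b^2 + ?d^2 \<le> (1 + c) * ?b^2 + 8 * c * ?T" using d1 by (simp add: algebra_simps)
  also have "\<dots> \<le> (1 + c) * ((1 - q^4) * ?S + 4 * ?T) + 8 * c * ?T"
    using key_inn[of n] c by (intro add_right_mono mult_left_mono) auto
  also have "\<dots> = (c - q^4) * ?S + (4 + 12 * c) * ?T"
    using c by (simp add: algebra_simps)
  finally show ?thesis by (simp add: c_def)
qed

lemma Fi_ge: assumes "generating X" shows "1 - q^4 \<le> FolX_inn q X"
proof -
  obtain x where x: "x \<in> X" "1 \<le> x" using gen_pos[OF assms] by blast
  have fX: "finite X" using assms by (simp add: generating_def)
  show ?thesis unfolding FolX_inn_def
  proof (rule cInf_greatest)
    show "{wsize q (bdry_inn X A) / wsize q A |A. finite A \<and> A \<noteq> {}} \<noteq> {}" by blast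
  next
    fix s assume "s \<in> {wsize q (bdry_inn X A) / wsize q A |A. finite A \<and> A \<noteq> {}}"
    then obtain A where A: "finite A" "A \<noteq> {}" "s = wsize q (bdry_inn X A) / wsize q A" by blast
    show "1 - q^4 \<le> s" using lower(1)[OF q0 q1 x fX A(1,2)] wsize_pos[OF q0 q1 A(1,2)] A(3)
      by (simp add: le_divide_eq)
  qed
qed

lemma F_ge: assumes "generating X" shows "1/q^4 - q^4 \<le> FolX q X"
proof -
  obtain x where x: "x \<in> X" "1 \<le> x" using gen_pos[OF assms] by blast
  have fX: "finite X" using assms by (simp add: generating_def)
  show ?thesis unfolding FolX_def
  proof (rule cInf_greatest)
    show "{wsize q (bdry X A) / wsize q A |A. finite A \<and> A \<noteq> {}} \<noteq> {}" by blast
  next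
    fix s assume "s \<in> {wsize q (bdry X A) / wsize q A |A. finite A \<and> A \<noteq> {}}"
    then obtain A where A: "finite A" "A \<noteq> {}" "s = wsize q (bdry X A) / wsize q A" by blast
    show "1/q^4 - q^4 \<le> s" using lower(2)[OF q0 q1 x fX A(1,2)] wsize_pos[OF q0 q1 A(1,2)] A(3)
      by (simp add: le_divide_eq)
  qed
qed

lemma Fi_one: "FolX_inn q {1} = 1 - q^4"
  unfolding FolX_inn_def
proof (rule inf_approx[where c = 4])
  show "{wsize q (bdry_inn {1} A) / wsize q A |A. finite A \<and> A \<noteq> {}} \<noteq> {}" by blast
  show "\<forall>s\<in>{wsize q (bdry_inn {1} A) / wsize q A |A. finite A \<and> A \<noteq> {}}. 1 - q^4 \<le> s"
  proof
    fix s assume "s \<in> {wsize q (bdry_inn {1} A) / wsize q A |A. finite A \<and> A \<noteq> {}}"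
    then obtain A where A: "finite A" "A \<noteq> {}" "s = wsize q (bdry_inn {1} A) / wsize q A" by blast
    show "1 - q^4 \<le> s" using lower(1)[OF q0 q1 _ _ _ A(1,2), of 1 "{1}"] wsize_pos[OF q0 q1 A(1,2)] A(3)
      by (simp add: le_divide_eq)
  qed
  show "\<forall>n::nat. \<exists>s\<in>{wsize q (bdry_inn {1} A) / wsize q A |A. finite A \<and> A \<noteq> {}}. s \<le> 1 - q^4 + 4 / (real n + 1)"
  proof
    fix n :: nat
    have "wsize q (bdry_inn {1} {..n}) \<le> wsize q {n}" by (rule wsize_mono[OF q0 q1 _ bi_sub]) simp
    also have "\<dots> = (dimq q n)^2" by (simp add: wsize_def)
    finally have "wsize q (bdry_inn {1} {..n}) \<le> (1 - q^4) * wsize q {..n} + 4 * (\<Sum>k\<le>n. dimq q k)"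
      using key_inn[of n] by linarith
    hence "wsize q (bdry_inn {1} {..n}) / wsize q {..n} \<le> 1 - q^4 + 4 / (real n + 1)"
      using TS[of n] wsize_pos[OF q0 q1, of "{..n}"] by (intro ratio_bound) auto
    thus "\<exists>s\<in>{wsize q (bdry_inn {1} A) / wsize q A |A. finite A \<and> A \<noteq> {}}. s \<le> 1 - q^4 + 4 / (real n + 1)"
      by blast
  qed
qed


lemma F_one: "FolX q {1} = 1/q^4 - q^4"
  unfolding FolX_def
proof (rule inf_approx[where c = "4 + 12/q^4"])
  show "{wsize q (bdry {1} A) / wsize q A |A. finite A \<and> A \<noteq> {}} \<noteq> {}" by blast
  show "\<forall>s\<in>{wsize q (bdry {1} A) / wsize q A |A. finite A \<and> A \<noteq> {}}. 1/q^4 - q^4 \<le> s"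
  proof
    fix s assume "s \<in> {wsize q (bdry {1} A) / wsize q A |A. finite A \<and> A \<noteq> {}}"
    then obtain A where A: "finite A" "A \<noteq> {}" "s = wsize q (bdry {1} A) / wsize q A" by blast
    show "1/q^4 - q^4 \<le> s" using lower(2)[OF q0 q1 _ _ _ A(1,2), of 1 "{1}"] wsize_pos[OF q0 q1 A(1,2)] A(3)
      by (simp add: le_divide_eq)
  qed
  show "\<forall>n::nat. \<exists>s\<in>{wsize q (bdry {1} A) / wsize q A |A. finite A \<and> A \<noteq> {}}. s \<le> 1/q^4 - q^4 + (4 + 12/q^4) / (real n + 1)"
  proof
    fix n :: nat
    have "wsize q (bdry {1} {..n}) \<le> wsize q {n, Suc n}" by (rule wsize_mono[OF q0 q1 _ b_sub]) simp
    also have "\<dots> = (dimq q n)^2 + (dimq q (Suc n))^2" by (simp add: wsize_def)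
    finally have "wsize q (bdry {1} {..n}) \<le> (1/q^4 - q^4) * wsize q {..n} + (4 + 12/q^4) * (\<Sum>k\<le>n. dimq q k)"
      using key_full[of n] by linarith
    hence "wsize q (bdry {1} {..n}) / wsize q {..n} \<le> 1/q^4 - q^4 + (4 + 12/q^4) / (real n + 1)"
      using TS[of n] wsize_pos[OF q0 q1, of "{..n}"] q0 by (intro ratio_bound) auto
    thus "\<exists>s\<in>{wsize q (bdry {1} A) / wsize q A |A. finite A \<and> A \<noteq> {}}. s \<le> 1/q^4 - q^4 + (4 + 12/q^4) / (real n + 1)"
      by blast
  qed
qed

lemma Fol_inn_val: "Fol_inn q = 1 - q^4"
  unfolding Fol_inn_def
proof (rule antisym)
  have bdd: "bdd_below {FolX_inn q X |X. generating X}"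
    using Fi_ge unfolding bdd_below_def by blast
  have "FolX_inn q {1} \<in> {FolX_inn q X |X. generating X}" using gen_one by blast
  from cInf_lower[OF this bdd] show "Inf {FolX_inn q X |X. generating X} \<le> 1 - q^4" using Fi_one by simp
  show "1 - q^4 \<le> Inf {FolX_inn q X |X. generating X}"
    using gen_one Fi_ge by (intro cInf_greatest) auto
qed

lemma Fol_val: "Fol q = 1/q^4 - q^4"
  unfolding Fol_def
proof (rule antisym)
  have bdd: "bdd_below {FolX q X |X. generating X}"
    using F_ge unfolding bdd_below_def by blast
  have "FolX q {1} \<in> {FolX q X |X. generating X}" using gen_one by blast
  from cInf_lower[OF this bdd] show "Inf {FolX q X |X. generating X} \<le> 1/q^4 - q^4" using F_one by simp
  show "1/q^4 - q^4 \<le> Inf {FolX q X |X. generating X}"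
    using gen_one F_ge by (intro cInf_greatest) auto
qed

end

theorem proposition5p3:
  fixes q :: real
  assumes "0 < q" and "q \<le> 1"
  shows "Fol_inn q = 1 - q ^ 4 \<and> Fol q = q powr (-4) - q ^ 4"
proof -
  have "q powr (-4) = 1/q^4" using assms by (simp add: powr_minus_divide)
  thus ?thesis using Fol_inn_val[OF assms] Fol_val[OF assms] by simp
qed

end
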